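(* Let $E_1,\dots,E_J$ be finite-dimensional Hilbert spaces and $\mathcal{H}=E_1\times\dots\times E_J$ with the product inner product. For each $j$, let $E_j$ carry an orthonormal basis and a finite collection $G_j$ of pairwise disjoint groups of basis indices, let $K_j\ge1$ be an integer, let $\Sigma_j=\Sigma_{K_j}\subset E_j$ be the $K_j$-group-sparse model and $\|\cdot\|_{\mathcal{A}_j}$ the associated group norm. Let $\Sigma=\Sigma_1\times\dots\times\Sigma_J$ (so $\Sigma-\Sigma=\Sigma_{2K_1}\times\dots\times\Sigma_{2K_J}$) and $f(x_1,\dots,x_J)=\sum_{j=1}^J\|x_j\|_{\mathcal{A}_j}/\sqrt{K_j}$. Let $\mathcal{F}$ be a Hilbert space and $M:\mathcal{H}\to\mathcal{F}$ linear satisfying the RIP on $\Sigma-\Sigma$ with constant $\delta<1/\sqrt2$ if $J=1$, and $\delta<\sqrt{1/(2+J)}$ if $J\ge2$. Then for all $x_0\in\Sigma$, $e\in\mathcal{F}$, and $\eta\le\epsilon$ with $\|e\|_{\mathcal{F}}\le\eta$, any minimizer $x^*$ of $\min_{x\in\mathcal{H}}f(x)$ subject to $\|Mx-(Mx_0+e)\|_{\mathcal{F}}\le\epsilon$ satisfies $$\|x^*-x_0\|_{\mathcal{H}}\le\|x^*-x_0\|_\Sigma\le C\,(\eta+\epsilon),$$ where $C=\dfrac{2\sqrt{1+\delta}}{1-\delta\sqrt2}$ if $J=1$ and $C=\dfrac{(1+\sqrt{1+J})\sqrt{1+\delta}}{1-\delta\sqrt{2+J}}$ if $J\ge2$.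
   Context: For a finite-dimensional Hilbert space $E$ with orthonormal basis $(e_i)$ and finite collection $G$ of pairwise disjoint index sets (groups): $x_g=\sum_{i\in g}\langle x,e_i\rangle e_i$; the group support of $x$ is the smallest $H\subset G$ with $\sum_{g\in H}x_g=x$; $\Sigma_K=\{x:|\text{group support}(x)|\le K\}$; group norm $\|x\|_{\mathcal{A}}=\sum_{g\in G}\|x_g\|$ if $x\in\mathrm{span}\{e_i:i\in\bigcup_gg\}$, $+\infty$ otherwise. RIP on $\Sigma-\Sigma$ with constant $\delta$: $(1-\delta)\|x\|^2\le\|Mx\|_{\mathcal{F}}^2\le(1+\delta)\|x\|^2$ for all $x\in\Sigma-\Sigma$. $\|\cdot\|_\Sigma$ is the atomic norm with atoms $\Sigma\cap S(1)$: $\|x\|_\Sigma=\inf\{t\ge0:x\in t\cdot\overline{\mathrm{conv}}(\Sigma\cap S(1))\}$ ($+\infty$ if none), $S(1)$ the unit sphere of $\mathcal{H}$. *)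

theory Defs
  imports "HOL-Analysis.Analysis"
begin

text \<open>The whole product space H = E_1 x ... x E_J is modelled as real^'i, where the
finite type 'i is the disjoint union of the basis indices of all E_j, and
blk :: 'i => 'j assigns each basis index to its component (J = CARD('j)).
The orthonormal basis of E_j is the family of standard basis vectors axis i 1
with blk i = j.\<close>

definition gpart :: "'i set \<Rightarrow> real^'i \<Rightarrow> real^'i" where
  "gpart g x = (\<chi> i. if i \<in> g then x $ i else 0)"

definition blockpart :: "('i \<Rightarrow> 'j) \<Rightarrow> 'j \<Rightarrow> real^'i \<Rightarrow> real^'i" where
  "blockpart blk j x = (\<chi> i. if blk i = j then x $ i else 0)"

definition is_group_support :: "'i set set \<Rightarrow> real^'i \<Rightarrow> 'i set set \<Rightarrow> bool" where
  "is_group_support G x H \<longleftrightarrow>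
     H \<subseteq> G \<and> (\<Sum>g\<in>H. gpart g x) = x \<and>
     (\<forall>H'. H' \<subseteq> G \<and> (\<Sum>g\<in>H'. gpart g x) = x \<longrightarrow> H \<subseteq> H')"

definition group_sparse :: "'i set set \<Rightarrow> nat \<Rightarrow> (real^'i) set" where
  "group_sparse G K = {x. \<exists>H. is_group_support G x H \<and> card H \<le> K}"

definition group_norm :: "'i set set \<Rightarrow> real^'i \<Rightarrow> ereal" where
  "group_norm G x =
     (if x \<in> span {axis i (1::real) | i. i \<in> \<Union>G}
      then ereal (\<Sum>g\<in>G. norm (gpart g x)) else \<infinity>)"

definition atomic_norm :: "('a::real_normed_vector) set \<Rightarrow> 'a \<Rightarrow> ereal" where
  "atomic_norm S x =
     Inf {ereal t | t. t \<ge> 0 \<and> x \<in> (\<lambda>v. t *\<^sub>R v) ` closure (convex hull (S \<inter> sphere 0 1))}"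

definition prod_model :: "('i \<Rightarrow> 'j) \<Rightarrow> ('j \<Rightarrow> 'i set set) \<Rightarrow> ('j \<Rightarrow> nat) \<Rightarrow> (real^'i) set" where
  "prod_model blk G K = {x. \<forall>j. blockpart blk j x \<in> group_sparse (G j) (K j)}"

definition objective :: "('i \<Rightarrow> 'j::finite) \<Rightarrow> ('j \<Rightarrow> 'i set set) \<Rightarrow> ('j \<Rightarrow> nat) \<Rightarrow> real^'i \<Rightarrow> ereal" where
  "objective blk G K x =
     (\<Sum>j\<in>UNIV. ereal (1 / sqrt (real (K j))) * group_norm (G j) (blockpart blk j x))"

definition RIP :: "(real^'i \<Rightarrow> 'f::real_normed_vector) \<Rightarrow> (real^'i) set \<Rightarrow> real \<Rightarrow> bool" where
  "RIP M S \<delta> \<longleftrightarrow> (\<forall>x\<in>S. (1 - \<delta>) * (norm x)\<^sup>2 \<le> (norm (M x))\<^sup>2 \<and>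
                            (norm (M x))\<^sup>2 \<le> (1 + \<delta>) * (norm x)\<^sup>2)"

end

theory Submission
  imports Defs
begin


lemma gpart_nth[simp]: "(gpart g x) $ i = (if i \<in> g then x $ i else 0)"
  by (simp add: gpart_def)

lemma blockpart_nth[simp]: "(blockpart blk j x) $ i = (if blk i = j then x $ i else 0)"
  by (simp add: blockpart_def)

lemma sum_if_UNIV: "(\<Sum>i\<in>UNIV. if i \<in> g then f i else (0::real)) = (\<Sum>i\<in>g. f i)"
  for g :: "'i::finite set"
  by (simp add: sum.If_cases Int_def)

lemma gpart_inner: "gpart g y \<bullet> gpart g z = (\<Sum>i\<in>g. y$i * z$i)"
  for g :: "'i::finite set"
  by (simp add: inner_vec_def if_distrib[of "\<lambda>t. t * _"] cong: if_cong)
     (simp add: sum.If_cases Int_def)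

lemma norm_gpart_sq: "(norm (gpart g z))\<^sup>2 = (\<Sum>i\<in>g. (z$i)\<^sup>2)"
  for g :: "'i::finite set"
  unfolding power2_norm_eq_inner gpart_inner by (simp add: power2_eq_square)

lemma sum_gpart_nth:
  fixes H :: "'i::finite set set"
  assumes "pairwise disjnt H"
  shows "(\<Sum>g\<in>H. gpart g v) $ i = (if i \<in> \<Union>H then v $ i else 0)"
proof (cases "i \<in> \<Union>H")
  case True
  then obtain g0 where g0: "g0 \<in> H" "i \<in> g0" by auto
  have "(\<Sum>g\<in>H. gpart g v) $ i = (\<Sum>g\<in>H. if g = g0 then v$i else 0)"
    unfolding sum_component
    apply (rule sum.cong, simp)
    using assms g0 unfolding pairwise_def disjnt_def by auto
  also have "\<dots> = v $ i" using g0 finite_subset[of H UNIV] by simp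
  finally show ?thesis using True by simp
next
  case False
  then show ?thesis unfolding sum_component by (auto intro!: sum.neutral)
qed

lemma group_sparse_iff:
  fixes G :: "'i::finite set set"
  assumes disj: "pairwise disjnt G"
  shows "x \<in> group_sparse G K \<longleftrightarrow> (\<exists>H\<subseteq>G. card H \<le> K \<and> (\<forall>i. x$i \<noteq> 0 \<longrightarrow> i \<in> \<Union>H))"
proof
  assume "x \<in> group_sparse G K"
  then obtain H where H: "is_group_support G x H" "card H \<le> K" by (auto simp: group_sparse_def)
  then have HG: "H \<subseteq> G" and sx: "(\<Sum>g\<in>H. gpart g x) = x" by (auto simp: is_group_support_def)
  have dH: "pairwise disjnt H" using disj HG pairwise_subset by blast
  have "\<forall>i. x$i \<noteq> 0 \<longrightarrow> i \<in> \<Union>H"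
  proof (intro allI impI)
    fix i assume "x$i \<noteq> 0"
    then have "(\<Sum>g\<in>H. gpart g x)$i \<noteq> 0" using sx by simp
    then show "i \<in> \<Union>H" using sum_gpart_nth[OF dH] by (auto split: if_splits)
  qed
  then show "\<exists>H\<subseteq>G. card H \<le> K \<and> (\<forall>i. x$i \<noteq> 0 \<longrightarrow> i \<in> \<Union>H)" using HG H(2) by blast
next
  assume "\<exists>H\<subseteq>G. card H \<le> K \<and> (\<forall>i. x$i \<noteq> 0 \<longrightarrow> i \<in> \<Union>H)"
  then obtain H where HG: "H \<subseteq> G" and cH: "card H \<le> K" and sup: "\<forall>i. x$i \<noteq> 0 \<longrightarrow> i \<in> \<Union>H" by blast
  define H0 where "H0 = {g\<in>H. \<exists>i\<in>g. x$i \<noteq> 0}"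
  have H0G: "H0 \<subseteq> G" using HG by (auto simp: H0_def)
  have dH0: "pairwise disjnt H0" using disj H0G pairwise_subset by blast
  have "finite H" using finite_subset[of H UNIV] by simp
  then have cH0: "card H0 \<le> K" using cH card_mono[of H H0] by (auto simp: H0_def)
  have s0: "(\<Sum>g\<in>H0. gpart g x) = x"
  proof (rule vec_eq_iff[THEN iffD2], rule allI)
    fix i
    show "(\<Sum>g\<in>H0. gpart g x) $ i = x $ i"
      unfolding sum_gpart_nth[OF dH0] using sup by (auto simp: H0_def)
  qed
  have minimal: "\<forall>H'. H' \<subseteq> G \<and> (\<Sum>g\<in>H'. gpart g x) = x \<longrightarrow> H0 \<subseteq> H'"
  proof (intro allI impI subsetI)
    fix H' g assume a: "H' \<subseteq> G \<and> (\<Sum>g\<in>H'. gpart g x) = x" and g: "g \<in> H0"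
    then obtain i where i: "i \<in> g" "x$i \<noteq> 0" by (auto simp: H0_def)
    have dH': "pairwise disjnt H'" using disj a pairwise_subset by blast
    have "(\<Sum>g\<in>H'. gpart g x)$i \<noteq> 0" using a i by simp
    then obtain g' where g': "g' \<in> H'" "i \<in> g'" using sum_gpart_nth[OF dH'] by (auto split: if_splits)
    have "g \<in> G" "g' \<in> G" using g a g' H0G by auto
    then have "g = g'" using disj i g' unfolding pairwise_def disjnt_def by blast
    then show "g \<in> H'" using g' by simp
  qed
  have "is_group_support G x H0" using H0G s0 minimal by (simp add: is_group_support_def)
  then show "x \<in> group_sparse G K" using cH0 by (auto simp: group_sparse_def)
qed




lemma nsq_add: "(norm (c *\<^sub>R a + b))\<^sup>2 = c\<^sup>2*(norm a)\<^sup>2 + 2*c*(a \<bullet> b) + (norm b)\<^sup>2"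
  for a b :: "'a::real_inner"
  unfolding power2_norm_eq_inner by (simp add: inner_add inner_commute algebra_simps power2_eq_square)

lemma nsq_diff: "(norm (c *\<^sub>R a - b))\<^sup>2 = c\<^sup>2*(norm a)\<^sup>2 - 2*c*(a \<bullet> b) + (norm b)\<^sup>2"
  for a b :: "'a::real_inner"
  unfolding power2_norm_eq_inner by (simp add: inner_diff inner_commute algebra_simps power2_eq_square)

lemma rip_inner:
  fixes M :: "real^'i::finite \<Rightarrow> 'f::real_inner"
  assumes rip: "RIP M D \<delta>" and lin: "linear M" and g: "\<gamma> > 0"
    and p1: "\<gamma> *\<^sub>R p + q \<in> D" and p2: "\<gamma> *\<^sub>R p - q \<in> D"
  shows "4*\<gamma>*(M p \<bullet> M q) \<le> 4*\<gamma>*(p \<bullet> q) + 2*\<delta>*(\<gamma>\<^sup>2*(norm p)\<^sup>2 + (norm q)\<^sup>2)"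
proof -
  have e1: "(norm (M (\<gamma> *\<^sub>R p + q)))\<^sup>2 = \<gamma>\<^sup>2*(norm (M p))\<^sup>2 + 2*\<gamma>*(M p \<bullet> M q) + (norm (M q))\<^sup>2"
    using lin by (simp add: linear_add linear_scale nsq_add)
  have e2: "(norm (M (\<gamma> *\<^sub>R p - q)))\<^sup>2 = \<gamma>\<^sup>2*(norm (M p))\<^sup>2 - 2*\<gamma>*(M p \<bullet> M q) + (norm (M q))\<^sup>2"
    using lin by (simp add: linear_diff linear_scale nsq_diff)
  have e3: "(norm (\<gamma> *\<^sub>R p + q))\<^sup>2 = \<gamma>\<^sup>2*(norm p)\<^sup>2 + 2*\<gamma>*(p \<bullet> q) + (norm q)\<^sup>2"
    by (simp add: nsq_add)
  have e4: "(norm (\<gamma> *\<^sub>R p - q))\<^sup>2 = \<gamma>\<^sup>2*(norm p)\<^sup>2 - 2*\<gamma>*(p \<bullet> q) + (norm q)\<^sup>2"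
    by (simp add: nsq_diff)
  have r1: "(norm (M (\<gamma> *\<^sub>R p + q)))\<^sup>2 \<le> (1+\<delta>)*(norm (\<gamma> *\<^sub>R p + q))\<^sup>2" using rip p1 by (auto simp: RIP_def)
  have r2: "(1-\<delta>)*(norm (\<gamma> *\<^sub>R p - q))\<^sup>2 \<le> (norm (M (\<gamma> *\<^sub>R p - q)))\<^sup>2" using rip p2 by (auto simp: RIP_def)
  show ?thesis using r1 r2 unfolding e1 e2 e3 e4 by (simp add: algebra_simps)
qed

lemma exists_top:
  fixes f :: "'a \<Rightarrow> real"
  assumes fin: "finite X" and n: "n \<le> card X" and pos: "\<And>x. f x \<ge> 0"
  shows "\<exists>T\<subseteq>X. card T = n \<and> (\<forall>H\<subseteq>X. card H \<le> n \<longrightarrow> sum f H \<le> sum f T)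
            \<and> (\<forall>g\<in>X-T. \<forall>g'\<in>T. f g \<le> f g')"
proof -
  define F where "F = {T. T \<subseteq> X \<and> card T = n}"
  have finF: "finite F" using fin by (simp add: F_def)
  obtain T0 where "T0 \<subseteq> X" "card T0 = n" using obtain_subset_with_card_n[OF n] by metis
  then have neF: "F \<noteq> {}" by (auto simp: F_def)
  define m where "m = Max (sum f ` F)"
  have "m \<in> sum f ` F" unfolding m_def using finF neF by simp
  then obtain T where TF: "T \<in> F" and Tm: "sum f T = m" by auto
  have maxT: "\<And>T'. T' \<in> F \<Longrightarrow> sum f T' \<le> sum f T"
    using Tm finF by (simp add: m_def)
  have TX: "T \<subseteq> X" and cT: "card T = n" using TF by (auto simp: F_def)
  have finT: "finite T" using TX fin finite_subset by blast
  have exch: "\<forall>g\<in>X-T. \<forall>g'\<in>T. f g \<le> f g'"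
  proof (intro ballI, rule ccontr)
    fix g g' assume g: "g \<in> X - T" and g': "g' \<in> T" and lt: "\<not> f g \<le> f g'"
    define T' where "T' = insert g (T - {g'})"
    have "card T > 0" using g' finT by (auto simp: card_gt_0_iff)
    then have "T' \<in> F" using g g' TX cT finT by (auto simp: F_def T'_def card_insert_if)
    moreover have "sum f T' = sum f T - f g' + f g"
      using g g' finT by (simp add: T'_def sum.insert_if sum_diff1)
    ultimately show False using maxT lt by fastforce
  qed
  have big: "\<forall>H\<subseteq>X. card H \<le> n \<longrightarrow> sum f H \<le> sum f T"
  proof (intro allI impI)
    fix H assume H: "H \<subseteq> X" "card H \<le> n"
    have finH: "finite H" using H fin finite_subset by blast
    have "n - card H \<le> card (X - H)" using H n fin by (simp add: card_Diff_subset finH)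
    then obtain E where E: "E \<subseteq> X - H" "card E = n - card H" "finite E"
      using obtain_subset_with_card_n by metis
    have "H \<inter> E = {}" using E by blast
    then have "card (H \<union> E) = n" using E H finH by (simp add: card_Un_disjoint)
    then have "H \<union> E \<in> F" using E H by (auto simp: F_def)
    then have "sum f (H \<union> E) \<le> sum f T" by (rule maxT)
    moreover have "sum f H \<le> sum f (H \<union> E)"
      using E finH pos by (intro sum_mono2) auto
    ultimately show "sum f H \<le> sum f T" by simp
  qed
  show ?thesis using TX cT big exch by blast
qed




lemma sum_le_sqrt_card:
  fixes b :: "'a \<Rightarrow> real"
  assumes "\<forall>g\<in>S. b g \<ge> 0"
  shows "sum b S \<le> sqrt (card S) * sqrt (\<Sum>g\<in>S. (b g)\<^sup>2)"
proof -
  have "(\<Sum>g\<in>S. \<bar>1::real\<bar> * \<bar>b g\<bar>) \<le> L2_set (\<lambda>_. 1) S * L2_set b S" by (rule L2_set_mult_ineq)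
  moreover have "(\<Sum>g\<in>S. \<bar>1::real\<bar> * \<bar>b g\<bar>) = sum b S" using assms by (intro sum.cong) auto
  ultimately show ?thesis by (simp add: L2_set_def)
qed

lemma tail_bound:
  fixes b c :: "'a \<Rightarrow> real" and K :: nat
  assumes fin: "finite G" and K: "K \<ge> 1" and m: "m \<ge> 0"
   and b0: "\<forall>g\<in>G. b g \<ge> 0"
   and c0: "\<forall>g\<in>G. 0 \<le> c g \<and> c g \<le> m / sqrt K"
   and csum: "sum c G \<le> m * sqrt K"
   and S: "S \<subseteq> G" "card S = min K (card G)"
   and exch: "\<forall>g\<in>G-S. \<forall>g'\<in>S. b g \<le> b g'"
  shows "(\<Sum>g\<in>G. c g * b g) \<le> m * sqrt (\<Sum>g\<in>S. (b g)\<^sup>2)"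
proof -
  have sK: "sqrt K > 0" using K by simp
  have finS: "finite S" using S fin finite_subset by blast
  show ?thesis
  proof (cases "card G \<le> K")
    case True
    then have SG: "S = G" using S fin by (simp add: card_subset_eq)
    have "(\<Sum>g\<in>G. c g * b g) \<le> (\<Sum>g\<in>G. (m / sqrt K) * b g)"
      using c0 b0 by (intro sum_mono mult_right_mono) auto
    also have "\<dots> = (m / sqrt K) * sum b G" by (simp add: sum_distrib_left)
    also have "\<dots> \<le> (m / sqrt K) * (sqrt (card G) * sqrt (\<Sum>g\<in>G. (b g)\<^sup>2))"
      using sum_le_sqrt_card[OF b0] m sK by (intro mult_left_mono) auto
    also have "\<dots> \<le> (m / sqrt K) * (sqrt K * sqrt (\<Sum>g\<in>G. (b g)\<^sup>2))"
      using True m sK by (intro mult_left_mono mult_right_mono) (auto intro: sum_nonneg)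
    also have "\<dots> = m * sqrt (\<Sum>g\<in>G. (b g)\<^sup>2)" using sK by simp
    finally show ?thesis using SG by simp
  next
    case False
    then have cS: "card S = K" using S by simp
    then have Sne: "S \<noteq> {}" using K by auto
    define \<tau> where "\<tau> = Min (b ` S)"
    have tau_le: "\<And>g. g \<in> S \<Longrightarrow> \<tau> \<le> b g" using finS by (simp add: \<tau>_def)
    have tau_in: "\<tau> \<in> b ` S" using finS Sne by (simp add: \<tau>_def)
    then have tau0: "\<tau> \<ge> 0" using b0 S by auto
    have ge_tau: "\<And>g. g \<in> G - S \<Longrightarrow> b g \<le> \<tau>" using exch tau_in by auto
    have split: "(\<Sum>g\<in>G. c g * b g) = (\<Sum>g\<in>S. c g * b g) + (\<Sum>g\<in>G-S. c g * b g)"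
      using S fin by (simp add: sum.subset_diff)
    have splitc: "sum c G = sum c S + sum c (G - S)"
      using S fin by (simp add: sum.subset_diff)
    have "(\<Sum>g\<in>G-S. c g * b g) \<le> (\<Sum>g\<in>G-S. c g * \<tau>)"
      using c0 ge_tau by (intro sum_mono mult_left_mono) auto
    also have "\<dots> = \<tau> * sum c (G - S)" by (simp add: sum_distrib_left mult.commute)
    also have "\<dots> \<le> \<tau> * (m * sqrt K - sum c S)" using splitc csum tau0 by (intro mult_left_mono) auto
    finally have t1: "(\<Sum>g\<in>G-S. c g * b g) \<le> \<tau> * (m * sqrt K - sum c S)" .
    have "(\<Sum>g\<in>S. c g * b g) + \<tau> * (m * sqrt K - sum c S) = (\<Sum>g\<in>S. c g * (b g - \<tau>)) + \<tau> * m * sqrt K"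
      by (simp add: algebra_simps sum_subtractf sum_distrib_left sum_distrib_right)
    also have "(\<Sum>g\<in>S. c g * (b g - \<tau>)) \<le> (\<Sum>g\<in>S. (m / sqrt K) * (b g - \<tau>))"
      using c0 S tau_le by (intro sum_mono mult_right_mono) auto
    also have "(\<Sum>g\<in>S. (m / sqrt K) * (b g - \<tau>)) = (m / sqrt K) * sum b S - (m / sqrt K) * K * \<tau>"
    proof -
      have "(\<Sum>g\<in>S. (m / sqrt K) * (b g - \<tau>)) = (m / sqrt K) * (\<Sum>g\<in>S. (b g - \<tau>))"
        by (simp add: sum_distrib_left)
      also have "(\<Sum>g\<in>S. (b g - \<tau>)) = sum b S - K * \<tau>" using cS by (simp add: sum_subtractf)
      finally show ?thesis by (simp add: algebra_simps)
    qed
    also have "(m / sqrt K) * K * \<tau> = \<tau> * m * sqrt K"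
      using sK by (simp add: field_simps)
    finally have t2: "(\<Sum>g\<in>G. c g * b g) \<le> (m / sqrt K) * sum b S"
      using split t1 by linarith
    also have "\<dots> \<le> (m / sqrt K) * (sqrt K * sqrt (\<Sum>g\<in>S. (b g)\<^sup>2))"
      using sum_le_sqrt_card[of S b] b0 S m sK cS by (intro mult_left_mono) auto
    also have "\<dots> = m * sqrt (\<Sum>g\<in>S. (b g)\<^sup>2)" using sK by simp
    finally show ?thesis .
  qed
qed




locale gsetup =
  fixes blk :: "'i::finite \<Rightarrow> 'j::finite" and G :: "'j \<Rightarrow> 'i set set" and K :: "'j \<Rightarrow> nat"
  assumes gib: "\<And>j g. g \<in> G j \<Longrightarrow> g \<subseteq> {i. blk i = j}"
    and gdisj: "\<And>j. pairwise disjnt (G j)"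
    and gne: "\<And>j g. g \<in> G j \<Longrightarrow> g \<noteq> {}"
    and cne: "\<And>j. G j \<noteq> {}"
    and Kpos: "\<And>j. K j \<ge> 1"
begin

lemma finG[simp]: "finite (G j)"
  using finite_subset[of "G j" UNIV] by simp

lemma blk_mem: "g \<in> G j \<Longrightarrow> i \<in> g \<Longrightarrow> blk i = j"
  using gib by blast

lemma same_group: "g \<in> G j \<Longrightarrow> g' \<in> G j' \<Longrightarrow> i \<in> g \<Longrightarrow> i \<in> g' \<Longrightarrow> g = g'"
  using blk_mem[of g j i] blk_mem[of g' j' i] gdisj[of j] unfolding pairwise_def disjnt_def by blast

lemma mem_T_iff: assumes "T j \<subseteq> G j" "g \<in> G j" "i \<in> g"
  shows "i \<in> \<Union>(T (blk i)) \<longleftrightarrow> g \<in> T j"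
  using assms blk_mem[OF assms(2,3)] same_group[of g j _ j i] by blast

lemma Sig_iff: "x \<in> prod_model blk G K \<longleftrightarrow>
   (\<exists>H. \<forall>j. H j \<subseteq> G j \<and> card (H j) \<le> K j \<and> (\<forall>i. blk i = j \<longrightarrow> x$i \<noteq> 0 \<longrightarrow> i \<in> \<Union>(H j)))"
proof -
  have "x \<in> prod_model blk G K \<longleftrightarrow> (\<forall>j. \<exists>H. H \<subseteq> G j \<and> card H \<le> K j \<and> (\<forall>i. blk i = j \<longrightarrow> x$i \<noteq> 0 \<longrightarrow> i \<in> \<Union>H))"
    unfolding prod_model_def mem_Collect_eq group_sparse_iff[OF gdisj] by simp
  also have "\<dots> \<longleftrightarrow> (\<exists>H. \<forall>j. H j \<subseteq> G j \<and> card (H j) \<le> K j \<and> (\<forall>i. blk i = j \<longrightarrow> x$i \<noteq> 0 \<longrightarrow> i \<in> \<Union>(H j)))"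
    by (rule choice_iff)
  finally show ?thesis .
qed

lemma Sig_scale: "x \<in> prod_model blk G K \<Longrightarrow> c *\<^sub>R x \<in> prod_model blk G K"
  unfolding Sig_iff by auto

lemma Sig_res: assumes "\<And>j. T j \<subseteq> G j" "\<And>j. card (T j) \<le> K j"
  shows "(\<chi> i. if i \<in> \<Union>(T (blk i)) then z$i else 0) \<in> prod_model blk G K"
  unfolding Sig_iff using assms by (intro exI[of _ T]) auto

lemma atom_exists: "\<exists>u. u \<in> prod_model blk G K \<and> norm u = 1"
proof -
  obtain g where g: "g \<in> G undefined" using cne by blast
  then obtain i where i: "i \<in> g" using gne by blast
  have bi: "blk i = undefined" using blk_mem g i by blast
  define H where "H = (\<lambda>j. if j = blk i then {g} else {})"
  have "axis i 1 \<in> prod_model blk G K"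
    unfolding Sig_iff using g i bi Kpos by (intro exI[of _ H]) (auto simp: H_def axis_def)
  then show ?thesis by (intro exI[of _ "axis i 1"]) simp
qed

lemma sum_groups:
  fixes f :: "'i \<Rightarrow> real"
  assumes "\<And>i. i \<notin> (\<Union>j. \<Union>(G j)) \<Longrightarrow> f i = 0"
  shows "(\<Sum>i\<in>UNIV. f i) = (\<Sum>j\<in>UNIV. \<Sum>g\<in>G j. \<Sum>i\<in>g. f i)"
proof -
  have "(\<Sum>j\<in>UNIV. \<Sum>g\<in>G j. \<Sum>i\<in>g. f i) = (\<Sum>j\<in>UNIV. \<Sum>i\<in>\<Union>(G j). f i)"
  proof (rule sum.cong[OF refl])
    fix j
    show "(\<Sum>g\<in>G j. \<Sum>i\<in>g. f i) = (\<Sum>i\<in>\<Union>(G j). f i)"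
      using sum.Union_disjoint[of "G j" f] gdisj[of j] finite_subset[of _ "UNIV::'i set"] by (auto simp: pairwise_def disjnt_def)
  qed
  also have "\<dots> = (\<Sum>i\<in>(\<Union>j. \<Union>(G j)). f i)"
    by (rule sum.UNION_disjoint[symmetric]) (auto dest: blk_mem)
  also have "\<dots> = (\<Sum>i\<in>UNIV. f i)"
    by (rule sum.mono_neutral_left) (auto intro: assms)
  finally show ?thesis by simp
qed

lemma gpart_blockpart: "g \<in> G j \<Longrightarrow> gpart g (blockpart blk j x) = gpart g x"
  by (simp add: vec_eq_iff blk_mem)

definition nrm :: "'j \<Rightarrow> real^'i \<Rightarrow> real" where
  "nrm j x = (\<Sum>g\<in>G j. norm (gpart g x))"

definition supp_ok :: "real^'i \<Rightarrow> bool" where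
  "supp_ok x \<longleftrightarrow> (\<forall>i. x$i \<noteq> 0 \<longrightarrow> i \<in> \<Union>(G (blk i)))"

lemma span_axis: assumes "\<And>i. i \<notin> U \<Longrightarrow> v$i = 0"
  shows "v \<in> span {axis i (1::real) | i. i \<in> U}"
proof -
  have "v = (\<Sum>i\<in>U. v$i *\<^sub>R axis i 1)"
    using assms by (auto simp: vec_eq_iff sum_component axis_def if_distrib[of "\<lambda>t. _ * t"] cong: if_cong)
  also have "\<dots> \<in> span {axis i (1::real) | i. i \<in> U}"
    by (intro span_sum span_mul span_base) auto
  finally show ?thesis .
qed

lemma span_axis_zero: assumes "v \<in> span {axis i (1::real) | i. i \<in> U}" "k \<notin> U"
  shows "v$k = 0"
proof -
  have "span {axis i (1::real) | i. i \<in> U} \<subseteq> {v. v$k = 0}"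
    by (rule span_minimal) (use assms(2) in \<open>auto simp: subspace_def axis_def\<close>)
  then show ?thesis using assms(1) by auto
qed

lemma obj_fin: assumes "supp_ok x"
  shows "objective blk G K x = ereal (\<Sum>j\<in>UNIV. 1 / sqrt (K j) * nrm j x)"
proof -
  have "group_norm (G j) (blockpart blk j x) = ereal (nrm j x)" for j
  proof -
    have "blockpart blk j x \<in> span {axis i (1::real) | i. i \<in> \<Union>(G j)}"
      by (rule span_axis) (use assms in \<open>auto simp: supp_ok_def\<close>)
    then show ?thesis unfolding group_norm_def nrm_def by (simp add: gpart_blockpart)
  qed
  then show ?thesis unfolding objective_def by simp
qed

lemma obj_inf: assumes "\<not> supp_ok x"
  shows "objective blk G K x = \<infinity>"
proof -
  obtain k where k: "x$k \<noteq> 0" "k \<notin> \<Union>(G (blk k))" using assms by (auto simp: supp_ok_def)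
  have "blockpart blk (blk k) x \<notin> span {axis i (1::real) | i. i \<in> \<Union>(G (blk k))}"
    using span_axis_zero[of "blockpart blk (blk k) x" "\<Union>(G (blk k))" k] k by auto
  then have gi: "group_norm (G (blk k)) (blockpart blk (blk k) x) = \<infinity>" by (simp add: group_norm_def)
  have "K (blk k) \<ge> 1" by (rule Kpos)
  then have "ereal (1 / sqrt (real (K (blk k)))) * group_norm (G (blk k)) (blockpart blk (blk k) x) = \<infinity>"
    unfolding gi by simp
  then show ?thesis unfolding objective_def sum_Pinfty by auto
qed

end




lemma sum_sq_le_sq_sum:
  fixes f :: "'a \<Rightarrow> real"
  assumes "\<forall>x\<in>A. f x \<ge> 0"
  shows "(\<Sum>x\<in>A. (f x)\<^sup>2) \<le> (sum f A)\<^sup>2"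
  using assms
proof (induction A rule: infinite_finite_induct)
  case (insert x F)
  have "0 \<le> sum f F" using insert by (intro sum_nonneg) auto
  then have "0 \<le> 2 * f x * sum f F" using insert by simp
  then show ?case using insert by (simp add: power2_sum)
qed auto

context gsetup begin

lemma res_sq:
  assumes TG: "\<And>j. T j \<subseteq> G j"
  shows "(\<chi> i. if i \<in> \<Union>(T (blk i)) then x$i else 0) \<bullet> (\<chi> i. if i \<in> \<Union>(T (blk i)) then x$i else 0)
     = (\<Sum>j\<in>UNIV. \<Sum>g\<in>T j. (norm (gpart g x))\<^sup>2)"
proof -
  let ?v = "(\<chi> i. if i \<in> \<Union>(T (blk i)) then x$i else 0)"
  have "?v \<bullet> ?v = (\<Sum>i\<in>UNIV. ?v$i * ?v$i)" by (simp add: inner_vec_def)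
  also have "\<dots> = (\<Sum>j\<in>UNIV. \<Sum>g\<in>G j. \<Sum>i\<in>g. ?v$i * ?v$i)"
    by (rule sum_groups) (use TG in auto)
  also have "\<dots> = (\<Sum>j\<in>UNIV. \<Sum>g\<in>G j. if g \<in> T j then (norm (gpart g x))\<^sup>2 else 0)"
  proof (intro sum.cong refl)
    fix j g assume g: "g \<in> G j"
    show "(\<Sum>i\<in>g. ?v$i * ?v$i) = (if g \<in> T j then (norm (gpart g x))\<^sup>2 else 0)"
      unfolding norm_gpart_sq using mem_T_iff[of T j g, OF TG g] by (auto simp: power2_eq_square)
  qed
  also have "\<dots> = (\<Sum>j\<in>UNIV. \<Sum>g\<in>T j. (norm (gpart g x))\<^sup>2)"
    using TG by (simp add: sum.If_cases Int_absorb1)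
  finally show ?thesis .
qed

end



context gsetup begin

lemma main:
  fixes M :: "real^'i \<Rightarrow> 'f::{real_inner, complete_space}"
    and \<delta> \<eta> \<epsilon> :: real and x0 xs :: "real^'i" and e :: 'f
  assumes M_lin: "linear M"
    and rip: "RIP M {a - b | a b. a \<in> prod_model blk G K \<and> b \<in> prod_model blk G K} \<delta>"
    and delta_bound: "if CARD('j) = 1 then \<delta> < 1 / sqrt 2
                      else \<delta> < sqrt (1 / (2 + real CARD('j)))"
    and x0_in: "x0 \<in> prod_model blk G K"
    and eta_le: "\<eta> \<le> \<epsilon>"
    and e_le: "norm e \<le> \<eta>"
    and xs_feasible: "norm (M xs - (M x0 + e)) \<le> \<epsilon>"
    and xs_min: "\<And>x. norm (M x - (M x0 + e)) \<le> \<epsilon> \<Longrightarrow> objective blk G K xs \<le> objective blk G K x"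
  shows "ereal (norm (xs - x0)) \<le> atomic_norm (prod_model blk G K) (xs - x0) \<and>
         atomic_norm (prod_model blk G K) (xs - x0) \<le>
           ereal ((if CARD('j) = 1 then 2 * sqrt (1 + \<delta>) / (1 - \<delta> * sqrt 2)
                   else (1 + sqrt (1 + real CARD('j))) * sqrt (1 + \<delta>)
                        / (1 - \<delta> * sqrt (2 + real CARD('j)))) * (\<eta> + \<epsilon>))"
proof -
  define Sig where "Sig = prod_model blk G K"
  define DS where "DS = {a - b | a b. a \<in> Sig \<and> b \<in> Sig}"
  define A where "A = Sig \<inter> sphere 0 1"
  define C where "C = closure (convex hull A)"
  define z where "z = xs - x0"
  define \<xi> where "\<xi> = \<eta> + \<epsilon>"
  define J where "J = CARD('j)"
  have ripD: "RIP M DS \<delta>" using rip by (simp add: DS_def Sig_def)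
  have DSI: "a - b \<in> DS" if "a \<in> Sig" "b \<in> Sig" for a b using that by (auto simp: DS_def)
  have SigS: "c *\<^sub>R x \<in> Sig" if "x \<in> Sig" for c x using that Sig_scale by (simp add: Sig_def)
  obtain u0 where u0: "u0 \<in> Sig" "norm u0 = 1" using atom_exists by (auto simp: Sig_def)
  have zero_Sig: "0 \<in> Sig" using SigS[OF u0(1), of 0] by simp
  have u0A: "u0 \<in> A" using u0 by (simp add: A_def)
  have delta0: "\<delta> \<ge> 0"
  proof -
    have "u0 - 0 \<in> DS" using DSI u0 zero_Sig by blast
    then have "(1 - \<delta>) * (norm u0)\<^sup>2 \<le> (norm (M u0))\<^sup>2 \<and> (norm (M u0))\<^sup>2 \<le> (1 + \<delta>) * (norm u0)\<^sup>2"
      using ripD by (auto simp: RIP_def)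
    then show ?thesis using u0 by simp
  qed
  have xi0: "\<xi> \<ge> 0" using eta_le e_le norm_ge_zero[of e] unfolding \<xi>_def by linarith
  have Mz: "norm (M z) \<le> \<xi>"
  proof -
    have "M z = (M xs - (M x0 + e)) + e" by (simp add: z_def linear_diff[OF M_lin])
    then have "norm (M z) \<le> norm (M xs - (M x0 + e)) + norm e" by (metis norm_triangle_ineq)
    then show ?thesis using xs_feasible e_le by (simp add: \<xi>_def)
  qed
  have objle: "objective blk G K xs \<le> objective blk G K x0"
    by (rule xs_min) (use e_le eta_le in simp)
  obtain H0 where H0: "\<And>j. H0 j \<subseteq> G j" "\<And>j. card (H0 j) \<le> K j"
       "\<And>i. x0$i \<noteq> 0 \<Longrightarrow> i \<in> \<Union>(H0 (blk i))"
  proof -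
    from x0_in obtain H where H: "\<forall>j. H j \<subseteq> G j \<and> card (H j) \<le> K j \<and> (\<forall>i. blk i = j \<longrightarrow> x0$i \<noteq> 0 \<longrightarrow> i \<in> \<Union>(H j))"
      unfolding Sig_iff by (rule exE)
    show ?thesis by (rule that[of H]) (use H in auto)
  qed
  have x0ok: "supp_ok x0" unfolding supp_ok_def
  proof (intro allI impI)
    fix i assume "x0$i \<noteq> 0"
    then obtain g where "g \<in> H0 (blk i)" "i \<in> g" using H0(3) by blast
    then show "i \<in> \<Union>(G (blk i))" using H0(1) by blast
  qed
  have xsok: "supp_ok xs"
  proof (rule ccontr)
    assume "\<not> supp_ok xs"
    then have "objective blk G K xs = \<infinity>" by (rule obj_inf)
    then show False using objle obj_fin[OF x0ok] by simp
  qed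
  have nrmle: "(\<Sum>j\<in>UNIV. 1 / sqrt (K j) * nrm j xs) \<le> (\<Sum>j\<in>UNIV. 1 / sqrt (K j) * nrm j x0)"
    using objle unfolding obj_fin[OF x0ok] obj_fin[OF xsok] by simp
  have zok: "z$i = 0" if "i \<notin> (\<Union>j. \<Union>(G j))" for i
  proof -
    have "xs$i = 0" using xsok that unfolding supp_ok_def by blast
    moreover have "x0$i = 0" using x0ok that unfolding supp_ok_def by blast
    ultimately show ?thesis by (simp add: z_def)
  qed
  define a where "a g = norm (gpart g z)" for g
  have a0: "a g \<ge> 0" for g by (simp add: a_def)
  define PT where "PT j T \<longleftrightarrow> T \<subseteq> G j \<and> card T = min (K j) (card (G j)) \<and>
      (\<forall>H\<subseteq>G j. card H \<le> min (K j) (card (G j)) \<longrightarrow> sum a H \<le> sum a T) \<and> (\<forall>g\<in>G j - T. \<forall>g'\<in>T. a g \<le> a g')" for j T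
  have "\<forall>j. \<exists>T. PT j T"
  proof
    fix j
    show "\<exists>T. PT j T" unfolding PT_def
      using exists_top[of "G j" "min (K j) (card (G j))" a] a0 by simp
  qed
  then obtain T where PTT: "\<forall>j. PT j (T j)" unfolding choice_iff by (rule exE)
  have TG: "\<And>j. T j \<subseteq> G j" and cT: "\<And>j. card (T j) = min (K j) (card (G j))"
    and Tmax: "\<And>j H. H \<subseteq> G j \<Longrightarrow> card H \<le> min (K j) (card (G j)) \<Longrightarrow> sum a H \<le> sum a (T j)"
    and Texch: "\<And>j g g'. g \<in> G j - T j \<Longrightarrow> g' \<in> T j \<Longrightarrow> a g \<le> a g'"
    using PTT unfolding PT_def by blast+
  have xs_eq: "xs = x0 + z" by (simp add: z_def)
  have block: "sum a (G j - T j) - sum a (T j) \<le> nrm j xs - nrm j x0" for j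
  proof -
    have x0g: "gpart g x0 = 0" if g: "g \<in> G j - H0 j" for g
    proof (rule vec_eq_iff[THEN iffD2], rule allI)
      fix i show "gpart g x0 $ i = 0 $ i"
      proof (cases "i \<in> g \<and> x0$i \<noteq> 0")
        case True
        then obtain g' where g': "g' \<in> H0 (blk i)" "i \<in> g'" using H0(3) by blast
        have "blk i = j" using g True blk_mem by blast
        then have "g = g'" using same_group[of g j g' j i] g g' H0(1) True by blast
        then show ?thesis using g g' \<open>blk i = j\<close> by simp
      qed auto
    qed
    have gxs: "gpart g xs = gpart g x0 + gpart g z" for g by (simp add: vec_eq_iff xs_eq)
    have HG: "H0 j \<subseteq> G j" by (rule H0)
    have "nrm j xs = (\<Sum>g\<in>H0 j. norm (gpart g xs)) + (\<Sum>g\<in>G j - H0 j. norm (gpart g xs))"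
      unfolding nrm_def using HG by (simp add: sum.subset_diff)
    also have "(\<Sum>g\<in>G j - H0 j. norm (gpart g xs)) = sum a (G j - H0 j)"
      by (intro sum.cong refl) (simp add: gxs x0g a_def)
    finally have n1: "nrm j xs = (\<Sum>g\<in>H0 j. norm (gpart g xs)) + sum a (G j - H0 j)" .
    have "nrm j x0 = (\<Sum>g\<in>H0 j. norm (gpart g x0)) + (\<Sum>g\<in>G j - H0 j. norm (gpart g x0))"
      unfolding nrm_def using HG by (simp add: sum.subset_diff)
    then have n2: "nrm j x0 = (\<Sum>g\<in>H0 j. norm (gpart g x0))" by (simp add: x0g)
    have "(\<Sum>g\<in>H0 j. norm (gpart g x0)) - sum a (H0 j) \<le> (\<Sum>g\<in>H0 j. norm (gpart g xs))"
      unfolding sum_subtractf[symmetric] a_def gxs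
      by (intro sum_mono) (metis norm_diff_ineq add.commute)
    moreover have "sum a (H0 j) \<le> sum a (T j)"
      using Tmax[of "H0 j" j] HG H0(2)[of j] card_mono[OF finG HG] by simp
    moreover have "sum a (G j - T j) = sum a (G j) - sum a (T j)" using TG[of j] by (simp add: sum_diff)
    moreover have "sum a (G j - H0 j) = sum a (G j) - sum a (H0 j)" using HG by (simp add: sum_diff)
    ultimately show ?thesis using n1 n2 by linarith
  qed
  have Kp: "sqrt (K j) > 0" for j using Kpos[of j] by simp
  have cone: "(\<Sum>j\<in>UNIV. sum a (G j - T j) / sqrt (K j)) \<le> (\<Sum>j\<in>UNIV. sum a (T j) / sqrt (K j))"
  proof -
    have "(\<Sum>j\<in>UNIV. sum a (G j - T j) / sqrt (K j)) - (\<Sum>j\<in>UNIV. sum a (T j) / sqrt (K j))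
        = (\<Sum>j\<in>UNIV. 1 / sqrt (K j) * (sum a (G j - T j) - sum a (T j)))"
      by (simp add: sum_subtractf[symmetric] diff_divide_distrib)
    also have "\<dots> \<le> (\<Sum>j\<in>UNIV. 1 / sqrt (K j) * (nrm j xs - nrm j x0))"
      using block Kp by (intro sum_mono mult_left_mono) (auto simp: less_imp_le)
    also have "\<dots> \<le> 0" using nrmle by (simp add: sum_subtractf right_diff_distrib)
    finally show ?thesis by simp
  qed
  define t where "t j = sqrt (\<Sum>g\<in>T j. (a g)\<^sup>2)" for j
  define At where "At j = sum a (G j - T j)" for j
  define h where "h = (\<chi> i. if i \<in> \<Union>(T (blk i)) then z$i else 0)"
  define w where "w = z - h"
  define s where "s = norm h"
  have t0: "t j \<ge> 0" for j by (simp add: t_def sum_nonneg)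
  have At0: "At j \<ge> 0" for j by (simp add: At_def sum_nonneg a0)
  have s0: "s \<ge> 0" by (simp add: s_def)
  have hSig: "h \<in> Sig" unfolding h_def Sig_def
    by (rule Sig_res) (use TG cT in auto)
  have w_nth: "w$i = (if i \<in> \<Union>(T (blk i)) then 0 else z$i)" for i
    by (simp add: w_def h_def)
  have hw: "h \<bullet> w = 0" unfolding inner_vec_def by (rule sum.neutral) (simp add: h_def w_nth)
  have s2: "s\<^sup>2 = (\<Sum>j\<in>UNIV. (t j)\<^sup>2)"
  proof -
    have "s\<^sup>2 = h \<bullet> h" by (simp add: s_def power2_norm_eq_inner)
    also have "\<dots> = (\<Sum>j\<in>UNIV. \<Sum>g\<in>T j. (norm (gpart g z))\<^sup>2)"
      unfolding h_def by (rule res_sq) (rule TG)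
    also have "\<dots> = (\<Sum>j\<in>UNIV. (t j)\<^sup>2)"
      by (intro sum.cong refl) (simp add: t_def a_def sum_nonneg)
    finally show ?thesis .
  qed
  have sumT: "sum a (T j) \<le> sqrt (K j) * t j" for j
  proof -
    have "sum a (T j) \<le> sqrt (card (T j)) * t j"
      unfolding t_def by (rule sum_le_sqrt_card) (simp add: a0)
    also have "\<dots> \<le> sqrt (K j) * t j" using cT[of j] t0[of j] by (intro mult_right_mono) auto
    finally show ?thesis .
  qed
  have tailb: "a g \<le> t j / sqrt (K j)" if g: "g \<in> G j - T j" for g j
  proof -
    have "T j \<noteq> G j" using g by blast
    then have "card (T j) < card (G j)" using TG[of j] by (simp add: psubset_card_mono psubset_eq)
    then have cTK: "card (T j) = K j" using cT[of j] by simp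
    have "(\<Sum>g'\<in>T j. (a g)\<^sup>2) \<le> (\<Sum>g'\<in>T j. (a g')\<^sup>2)"
      using Texch[OF g] a0 by (intro sum_mono power_mono) auto
    then have "K j * (a g)\<^sup>2 \<le> (t j)\<^sup>2" using cTK by (simp add: t_def sum_nonneg)
    then have "(a g * sqrt (K j))\<^sup>2 \<le> (t j)\<^sup>2" by (simp add: power_mult_distrib mult.commute)
    then have "a g * sqrt (K j) \<le> t j" using t0[of j] by (rule power2_le_imp_le)
    then show ?thesis using Kp[of j] by (simp add: pos_le_divide_eq)
  qed
  have cone': "(\<Sum>j\<in>UNIV. At j / sqrt (K j)) \<le> (\<Sum>j\<in>UNIV. t j)"
  proof -
    have "(\<Sum>j\<in>UNIV. sum a (T j) / sqrt (K j)) \<le> (\<Sum>j\<in>UNIV. t j)"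
    proof (rule sum_mono)
      fix j show "sum a (T j) / sqrt (K j) \<le> t j"
        using sumT[of j] Kp[of j] by (simp add: divide_le_eq mult.commute)
    qed
    then show ?thesis using cone by (simp add: At_def)
  qed
  define D where "D = (if J = 1 then 1 else sqrt (1 + J))"
  define R where "R = (if J = 1 then sqrt 2 else sqrt (2 + J))"
  have D0: "D > 0" by (simp add: D_def)
  have R0: "R > 0" by (simp add: R_def)
  have R2: "R\<^sup>2 = D\<^sup>2 + 1" by (simp add: R_def D_def)
  define m where "m j = max (t j) (At j / sqrt (K j))" for j
  have m0: "m j \<ge> 0" for j using t0[of j] by (simp add: m_def)
  have msum: "(\<Sum>j\<in>UNIV. (m j)\<^sup>2) \<le> D\<^sup>2 * s\<^sup>2"
  proof (cases "J = 1")
    case True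
    then obtain j0 :: 'j where U: "UNIV = {j0}" unfolding J_def using card_1_singletonE by blast
    have e1: "(\<Sum>j\<in>UNIV. At j / sqrt (K j)) = At j0 / sqrt (K j0)" unfolding U by simp
    have e2: "(\<Sum>j\<in>UNIV. t j) = t j0" unfolding U by simp
    have "At j0 / sqrt (K j0) \<le> t j0" using cone' unfolding e1 e2 .
    then have "m j0 = t j0" by (simp add: m_def)
    moreover have "(\<Sum>j\<in>UNIV. (m j)\<^sup>2) = (m j0)\<^sup>2" unfolding U by simp
    moreover have "(\<Sum>j\<in>UNIV. (t j)\<^sup>2) = (t j0)\<^sup>2" unfolding U by simp
    ultimately show ?thesis using s2 True by (simp add: D_def)
  next
    case False
    have "(m j)\<^sup>2 \<le> (t j)\<^sup>2 + (At j / sqrt (K j))\<^sup>2" for j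
      using t0[of j] At0[of j] Kp[of j] by (simp add: m_def max_def)
    then have "(\<Sum>j\<in>UNIV. (m j)\<^sup>2) \<le> (\<Sum>j\<in>UNIV. (t j)\<^sup>2) + (\<Sum>j\<in>UNIV. (At j / sqrt (K j))\<^sup>2)"
      by (simp add: sum.distrib[symmetric] sum_mono)
    also have "(\<Sum>j\<in>UNIV. (At j / sqrt (K j))\<^sup>2) \<le> (\<Sum>j\<in>UNIV. At j / sqrt (K j))\<^sup>2"
      by (rule sum_sq_le_sq_sum) (use At0 Kp in \<open>auto intro: divide_nonneg_pos\<close>)
    also have "\<dots> \<le> (\<Sum>j\<in>UNIV. t j)\<^sup>2"
      using cone' by (intro power_mono) (auto intro!: sum_nonneg divide_nonneg_pos At0 Kp)
    also have "\<dots> \<le> (sqrt J * sqrt (\<Sum>j\<in>UNIV. (t j)\<^sup>2))\<^sup>2"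
      using sum_le_sqrt_card[of UNIV t] t0 by (intro power_mono) (auto simp: J_def intro!: sum_nonneg)
    also have "\<dots> = J * s\<^sup>2" by (simp add: power_mult_distrib s2 sum_nonneg)
    finally show ?thesis using s2 False by (simp add: D_def algebra_simps)
  qed
  have claim: "\<exists>c\<in>A. y \<bullet> w \<le> (D * s) * (y \<bullet> c)" for y
  proof -
    define b where "b g = norm (gpart g y)" for g
    have b0: "b g \<ge> 0" for g by (simp add: b_def)
    define PS where "PS j S \<longleftrightarrow> S \<subseteq> G j \<and> card S = min (K j) (card (G j)) \<and>
      (\<forall>H\<subseteq>G j. card H \<le> min (K j) (card (G j)) \<longrightarrow> sum b H \<le> sum b S) \<and> (\<forall>g\<in>G j - S. \<forall>g'\<in>S. b g \<le> b g')" for j S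
    have "\<forall>j. \<exists>S. PS j S"
    proof
      fix j
      show "\<exists>S. PS j S" unfolding PS_def
        using exists_top[of "G j" "min (K j) (card (G j))" b] b0 by simp
    qed
    then obtain S where PSS: "\<forall>j. PS j (S j)" unfolding choice_iff by (rule exE)
    have SG: "\<And>j. S j \<subseteq> G j" and cS: "\<And>j. card (S j) = min (K j) (card (G j))"
      and Sexch: "\<And>j. \<forall>g\<in>G j - S j. \<forall>g'\<in>S j. b g \<le> b g'"
      using PSS unfolding PS_def by blast+
    define Y where "Y j = sqrt (\<Sum>g\<in>S j. (b g)\<^sup>2)" for j
    have Y0: "Y j \<ge> 0" for j by (simp add: Y_def sum_nonneg)
    define yt where "yt = (\<chi> i. if i \<in> \<Union>(S (blk i)) then y$i else 0)"
    have ytSig: "yt \<in> Sig" unfolding yt_def Sig_def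
      by (rule Sig_res) (use SG cS in auto)
    have yt2: "yt \<bullet> yt = (\<Sum>j\<in>UNIV. (Y j)\<^sup>2)"
    proof -
      have "yt \<bullet> yt = (\<Sum>j\<in>UNIV. \<Sum>g\<in>S j. (norm (gpart g y))\<^sup>2)"
        unfolding yt_def by (rule res_sq) (rule SG)
      also have "\<dots> = (\<Sum>j\<in>UNIV. (Y j)\<^sup>2)"
        by (intro sum.cong refl) (simp add: Y_def b_def sum_nonneg)
      finally show ?thesis .
    qed
    have yyt: "y \<bullet> yt = yt \<bullet> yt" unfolding inner_vec_def by (intro sum.cong refl) (simp add: yt_def)
    define cc where "cc j g = (if g \<in> T j then 0 else a g)" for j g
    have yw1: "y \<bullet> w \<le> (\<Sum>j\<in>UNIV. \<Sum>g\<in>G j. cc j g * b g)"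
    proof -
      have "y \<bullet> w = (\<Sum>i\<in>UNIV. y$i * w$i)" by (simp add: inner_vec_def)
      also have "\<dots> = (\<Sum>j\<in>UNIV. \<Sum>g\<in>G j. \<Sum>i\<in>g. y$i * w$i)"
        by (rule sum_groups) (simp add: w_nth zok)
      also have "\<dots> \<le> (\<Sum>j\<in>UNIV. \<Sum>g\<in>G j. cc j g * b g)"
      proof (intro sum_mono)
        fix j g assume g: "g \<in> G j"
        show "(\<Sum>i\<in>g. y$i * w$i) \<le> cc j g * b g"
        proof (cases "g \<in> T j")
          case True
          then have "(\<Sum>i\<in>g. y$i * w$i) = 0"
            using mem_T_iff[of T j g, OF TG g] by (intro sum.neutral) (simp add: w_nth)
          then show ?thesis using True by (simp add: cc_def)
        next
          case False
          then have "(\<Sum>i\<in>g. y$i * w$i) = (\<Sum>i\<in>g. y$i * z$i)"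
            using mem_T_iff[of T j g, OF TG g] by (intro sum.cong refl) (simp add: w_nth)
          also have "\<dots> = gpart g y \<bullet> gpart g z" by (simp add: gpart_inner)
          also have "\<dots> \<le> b g * a g" unfolding a_def b_def by (rule norm_cauchy_schwarz)
          finally show ?thesis using False by (simp add: cc_def mult.commute)
        qed
      qed
      finally show ?thesis .
    qed
    have yw2: "(\<Sum>g\<in>G j. cc j g * b g) \<le> m j * Y j" for j
      unfolding Y_def
    proof (rule tail_bound)
      show "finite (G j)" by simp
      show "1 \<le> K j" by (rule Kpos)
      show "0 \<le> m j" by (rule m0)
      show "\<forall>g\<in>G j. 0 \<le> b g" using b0 by simp
      show "\<forall>g\<in>G j. 0 \<le> cc j g \<and> cc j g \<le> m j / sqrt (K j)"
      proof
        fix g assume g: "g \<in> G j"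
        have "0 \<le> m j / sqrt (K j)" using m0[of j] Kp[of j] by simp
        moreover have "a g \<le> m j / sqrt (K j)" if "g \<notin> T j"
        proof -
          have "a g \<le> t j / sqrt (K j)" using tailb[of g j] g that by simp
          also have "\<dots> \<le> m j / sqrt (K j)" using Kp[of j] by (intro divide_right_mono) (auto simp: m_def)
          finally show ?thesis .
        qed
        ultimately show "0 \<le> cc j g \<and> cc j g \<le> m j / sqrt (K j)" by (simp add: cc_def a0)
      qed
      have "sum (cc j) (G j) = At j"
        unfolding At_def cc_def using TG[of j]
        by (simp add: sum.If_cases Diff_eq Int_absorb1 Int_commute)
      also have "\<dots> = (At j / sqrt (K j)) * sqrt (K j)" using Kp[of j] by simp
      also have "\<dots> \<le> m j * sqrt (K j)" using Kp[of j] by (intro mult_right_mono) (auto simp: m_def)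
      finally show "sum (cc j) (G j) \<le> m j * sqrt (K j)" .
      show "S j \<subseteq> G j" by (rule SG)
      show "card (S j) = min (K j) (card (G j))" by (rule cS)
      show "\<forall>g\<in>G j - S j. \<forall>g'\<in>S j. b g \<le> b g'" by (rule Sexch)
    qed
    have "y \<bullet> w \<le> (\<Sum>j\<in>UNIV. m j * Y j)"
      using yw1 yw2 by (meson order_trans sum_mono)
    also have "\<dots> \<le> L2_set m UNIV * L2_set Y UNIV"
      using L2_set_mult_ineq[of m Y UNIV] m0 Y0 by simp
    also have "\<dots> \<le> (D * s) * norm yt"
    proof (rule mult_mono)
      have "L2_set m UNIV \<le> sqrt (D\<^sup>2 * s\<^sup>2)" unfolding L2_set_def using msum by simp
      also have "\<dots> = D * s" using D0 s0 by (simp add: real_sqrt_mult)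
      finally show "L2_set m UNIV \<le> D * s" .
      show "L2_set Y UNIV \<le> norm yt" by (simp add: L2_set_def norm_eq_sqrt_inner yt2)
      show "0 \<le> D * s" using D0 s0 by simp
      show "0 \<le> L2_set Y UNIV" by (rule L2_set_nonneg)
    qed
    finally have ywf: "y \<bullet> w \<le> (D * s) * norm yt" .
    show ?thesis
    proof (cases "yt = 0")
      case False
      define c where "c = (1 / norm yt) *\<^sub>R yt"
      have cA: "c \<in> A" using False ytSig SigS by (simp add: A_def c_def)
      have "y \<bullet> c = norm yt"
        using False by (simp add: c_def yyt power2_norm_eq_inner[symmetric] power2_eq_square)
      then have "y \<bullet> w \<le> (D * s) * (y \<bullet> c)" using ywf by simp
      then show ?thesis using cA by (rule_tac bexI)
    next
      case True
      then have yw0: "y \<bullet> w \<le> 0" using ywf by simp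
      have DS0: "0 \<le> D * s" using D0 s0 by simp
      have mu0: "- u0 \<in> A" using u0 SigS[of u0 "-1"] by (simp add: A_def)
      show ?thesis
      proof (cases "y \<bullet> u0 \<ge> 0")
        case True
        then show ?thesis using u0A yw0 DS0 by (intro bexI[of _ u0]) (auto intro: order_trans[OF _ mult_nonneg_nonneg])
      next
        case False
        then have "0 \<le> (D * s) * (y \<bullet> (- u0))" using DS0 by (simp add: mult_nonneg_nonpos)
        then have "y \<bullet> w \<le> (D * s) * (y \<bullet> (- u0))" using yw0 by linarith
        then show ?thesis using mu0 by (rule_tac bexI)
      qed
    qed
  qed
  define L where "L = D * s"
  have L0: "L \<ge> 0" using D0 s0 by (simp add: L_def)
  have AC: "A \<subseteq> C" unfolding C_def using hull_subset[of A convex] closure_subset[of "convex hull A"] by blast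
  have convC: "convex C" by (simp add: C_def convex_closure convex_convex_hull)
  have closC: "closed C" by (simp add: C_def)
  have w_in: "\<exists>c0\<in>C. w = L *\<^sub>R c0"
  proof (cases "L = 0")
    case True
    obtain c where c: "c \<in> A" "w \<bullet> w \<le> (D * s) * (w \<bullet> c)" using claim[of w] by blast
    moreover have "D * s = 0" using True by (simp add: L_def)
    ultimately have "w \<bullet> w \<le> 0" by simp
    then have "w = 0" by (metis inner_eq_zero_iff inner_ge_zero order_antisym)
    then show ?thesis using True c AC by (intro bexI[of _ c]) auto
  next
    case False
    then have Lp: "L > 0" using L0 by simp
    show ?thesis
    proof (rule ccontr)
      assume nc: "\<not> ?thesis"
      have "(1 / L) *\<^sub>R w \<notin> C"
      proof
        assume "(1 / L) *\<^sub>R w \<in> C"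
        moreover have "w = L *\<^sub>R ((1 / L) *\<^sub>R w)" using Lp by simp
        ultimately show False using nc by blast
      qed
      then obtain aa bb where ab: "aa \<bullet> ((1 / L) *\<^sub>R w) < bb" "\<forall>x\<in>C. bb < aa \<bullet> x"
        using separating_hyperplane_closed_point[OF convC closC] by blast
      obtain c where c: "c \<in> A" "(- aa) \<bullet> w \<le> (D * s) * ((- aa) \<bullet> c)" using claim[of "- aa"] by blast
      have f1: "aa \<bullet> c \<le> (aa \<bullet> w) / L" using c(2) Lp by (simp add: L_def pos_le_divide_eq mult.commute)
      have f2: "(aa \<bullet> w) / L < bb" using ab(1) by simp
      have f3: "bb < aa \<bullet> c" using ab(2) c(1) AC by blast
      show False using f1 f2 f3 by linarith
    qed
  qed
  have zhw: "z = h + w" by (simp add: w_def)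
  have hnorm: "norm h = s" by (simp add: s_def)
  have key: "s * (1 - \<delta> * R) \<le> sqrt (1 + \<delta>) * \<xi>"
  proof (cases "s = 0")
    case True
    then show ?thesis using delta0 xi0 by simp
  next
    case False
    then have sp: "s > 0" using s0 by simp
    then have Lp: "L > 0" using D0 by (simp add: L_def)
    obtain c0 where c0: "c0 \<in> C" "w = L *\<^sub>R c0" using w_in by blast
    have contM: "continuous_on UNIV M"
      by (rule linear_continuous_on) (simp add: M_lin linear_conv_bounded_linear[symmetric])
    define \<psi> where "\<psi> c = 4*R*L*(M (-h) \<bullet> M c) - 4*R*L*((-h) \<bullet> c) - 4*\<delta>*L*(c \<bullet> h)" for c
    define kk where "kk = 4*R*(M (-h) \<bullet> M h) - 4*R*((-h) \<bullet> h) - 2*\<delta>*(R\<^sup>2 * s\<^sup>2 + L\<^sup>2 + s\<^sup>2)"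
    define P where "P = {c. \<psi> c + kk \<le> 0}"
    have psi_lin: "\<psi> (u *\<^sub>R x + v *\<^sub>R y) = u * \<psi> x + v * \<psi> y" for u v :: real and x y :: "real^'i"
      unfolding \<psi>_def using M_lin
      by (simp add: linear_add linear_scale inner_add_right inner_add_left algebra_simps)
    have convP: "convex P"
    proof (rule convexI)
      fix x y :: "real^'i" and u v :: real
      assume xy: "x \<in> P" "y \<in> P" and uv: "0 \<le> u" "0 \<le> v" "u + v = 1"
      have v: "v = 1 - u" using uv by simp
      have "\<psi> (u *\<^sub>R x + v *\<^sub>R y) + kk = u * (\<psi> x + kk) + v * (\<psi> y + kk)"
        unfolding psi_lin v by (simp add: algebra_simps)
      also have "\<dots> \<le> 0" using xy uv by (simp add: P_def add_nonpos_nonpos mult_nonneg_nonpos)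
      finally show "u *\<^sub>R x + v *\<^sub>R y \<in> P" by (simp add: P_def)
    qed
    have closP: "closed P"
    proof -
      have "continuous_on UNIV (\<lambda>c. \<psi> c + kk)" unfolding \<psi>_def
        by (intro continuous_intros contM)
      then show ?thesis unfolding P_def by (rule closed_Collect_le) (rule continuous_on_const)
    qed
    have AP: "A \<subseteq> P"
    proof
      fix c assume "c \<in> A"
      then have cS: "c \<in> Sig" and cn: "norm c = 1" by (auto simp: A_def)
      have m1: "R *\<^sub>R (-h) + (L *\<^sub>R c + h) \<in> DS"
      proof -
        have eq: "R *\<^sub>R (-h) + (L *\<^sub>R c + h) = (1 - R) *\<^sub>R h - (- L) *\<^sub>R c" by (simp add: algebra_simps)
        show ?thesis unfolding eq by (rule DSI[OF SigS[OF hSig] SigS[OF cS]])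
      qed
      have m2: "R *\<^sub>R (-h) - (L *\<^sub>R c + h) \<in> DS"
      proof -
        have eq: "R *\<^sub>R (-h) - (L *\<^sub>R c + h) = (- (R + 1)) *\<^sub>R h - L *\<^sub>R c" by (simp add: algebra_simps)
        show ?thesis unfolding eq by (rule DSI[OF SigS[OF hSig] SigS[OF cS]])
      qed
      have r: "4*R*(M (-h) \<bullet> M (L *\<^sub>R c + h)) \<le> 4*R*((-h) \<bullet> (L *\<^sub>R c + h)) + 2*\<delta>*(R\<^sup>2*(norm (-h))\<^sup>2 + (norm (L *\<^sub>R c + h))\<^sup>2)"
        by (rule rip_inner[OF ripD M_lin R0 m1 m2])
      have e1: "M (L *\<^sub>R c + h) = L *\<^sub>R M c + M h" using M_lin by (simp add: linear_add linear_scale)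
      have e2: "(norm (L *\<^sub>R c + h))\<^sup>2 = L\<^sup>2 + 2*L*(c \<bullet> h) + s\<^sup>2" using cn hnorm by (simp add: nsq_add)
      have "\<psi> c + kk \<le> 0" using r unfolding e1 e2 \<psi>_def kk_def
        by (simp add: hnorm inner_add_right inner_add_left algebra_simps)
      then show "c \<in> P" by (simp add: P_def)
    qed
    have "C \<subseteq> P" unfolding C_def
      by (rule closure_minimal[OF hull_minimal[where S=convex, OF AP convP] closP])
    then have "\<psi> c0 + kk \<le> 0" using c0 by (auto simp: P_def)
    moreover have c0h: "c0 \<bullet> h = 0" using hw c0(2) Lp by (simp add: inner_commute)
    moreover have "h \<bullet> c0 = 0" using c0h by (simp add: inner_commute)
    moreover have "M z = L *\<^sub>R M c0 + M h" using M_lin c0(2) zhw by (simp add: linear_add linear_scale add.commute)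
    moreover have "h \<bullet> h = s\<^sup>2" by (simp add: hnorm[symmetric] power2_norm_eq_inner)
    ultimately have "- 4 * R * (M h \<bullet> M z) \<le> - 4 * R * s\<^sup>2 + 4 * \<delta> * R\<^sup>2 * s\<^sup>2"
      unfolding \<psi>_def kk_def R2 L_def using M_lin
      by (simp add: linear_neg inner_add_right inner_add_left algebra_simps power2_eq_square)
    then have "(4 * R) * (s\<^sup>2 - \<delta> * R * s\<^sup>2) \<le> (4 * R) * (M h \<bullet> M z)"
      by (simp add: power2_eq_square algebra_simps)
    then have i1: "s\<^sup>2 - \<delta> * R * s\<^sup>2 \<le> M h \<bullet> M z"
      by (rule mult_left_le_imp_le) (use R0 in simp)
    have "h - 0 \<in> DS" by (rule DSI[OF hSig zero_Sig])
    then have "(norm (M h))\<^sup>2 \<le> (1 + \<delta>) * s\<^sup>2" using ripD hnorm by (auto simp: RIP_def)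
    then have Mh: "norm (M h) \<le> sqrt (1 + \<delta>) * s"
      using s0 by (metis real_le_rsqrt real_sqrt_mult real_sqrt_abs abs_of_nonneg)
    have "M h \<bullet> M z \<le> norm (M h) * norm (M z)" by (rule norm_cauchy_schwarz)
    also have "\<dots> \<le> (sqrt (1 + \<delta>) * s) * \<xi>" using Mh Mz delta0 s0 by (intro mult_mono) auto
    finally have "s * (s * (1 - \<delta> * R)) \<le> s * (sqrt (1 + \<delta>) * \<xi>)" using i1
      by (simp add: power2_eq_square algebra_simps)
    then show ?thesis using sp by simp
  qed
  have zC: "\<exists>c\<in>C. z = ((1 + D) * s) *\<^sub>R c"
  proof (cases "s = 0")
    case True
    then have "h = 0" using hnorm by simp
    moreover obtain c0 where c0: "c0 \<in> C" "w = L *\<^sub>R c0" using w_in by blast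
    moreover have "L = 0" using True by (simp add: L_def)
    ultimately have "z = 0" using zhw by simp
    then show ?thesis using c0(1) True by (intro bexI[of _ c0]) auto
  next
    case False
    then have sp: "s > 0" using s0 by simp
    then have Lp: "L > 0" using D0 by (simp add: L_def)
    obtain c0 where c0: "c0 \<in> C" "w = L *\<^sub>R c0" using w_in by blast
    define c1 where "c1 = (1 / s) *\<^sub>R h"
    have c1A: "c1 \<in> A" using hSig SigS sp hnorm by (simp add: A_def c1_def)
    define c where "c = (s / (s + L)) *\<^sub>R c1 + (L / (s + L)) *\<^sub>R c0"
    have "c \<in> C" unfolding c_def
      using convC c1A AC c0(1) sp Lp by (intro convexD) (auto simp: add_divide_distrib[symmetric])
    moreover have "(s + L) *\<^sub>R c = z"
      using sp Lp by (simp add: c_def c1_def zhw c0(2) scaleR_add_right)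
    moreover have "(1 + D) * s = s + L" by (simp add: L_def algebra_simps)
    ultimately show ?thesis by (intro bexI[of _ c]) auto
  qed
  have upper: "atomic_norm Sig z \<le> ereal ((1 + D) * s)"
  proof -
    obtain c where c: "c \<in> C" "z = ((1 + D) * s) *\<^sub>R c" using zC by blast
    have "ereal ((1 + D) * s) \<in> {ereal t |t. t \<ge> 0 \<and> z \<in> (\<lambda>v. t *\<^sub>R v) ` closure (convex hull (Sig \<inter> sphere 0 1))}"
      using c D0 s0 by (auto simp: C_def A_def)
    then show ?thesis unfolding atomic_norm_def by (rule Inf_lower)
  qed
  have Cball: "C \<subseteq> cball 0 1"
  proof -
    have "A \<subseteq> cball 0 1" by (auto simp: A_def)
    then have "convex hull A \<subseteq> cball 0 1" by (rule hull_minimal[where S=convex]) (rule convex_cball)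
    then show ?thesis unfolding C_def by (rule closure_minimal) simp
  qed
  have lower: "ereal (norm z) \<le> atomic_norm Sig z"
    unfolding atomic_norm_def
  proof (rule Inf_greatest)
    fix x assume "x \<in> {ereal t |t. t \<ge> 0 \<and> z \<in> (\<lambda>v. t *\<^sub>R v) ` closure (convex hull (Sig \<inter> sphere 0 1))}"
    then obtain t v where tv: "x = ereal t" "t \<ge> 0" "v \<in> C" "z = t *\<^sub>R v" by (auto simp: C_def A_def)
    have "norm v \<le> 1" using Cball tv(3) by auto
    then have "norm z \<le> t" using tv by (simp add: mult_left_le)
    then show "ereal (norm z) \<le> x" using tv by simp
  qed
  have pos: "1 - \<delta> * R > 0"
  proof (cases "J = 1")
    case True
    then have "\<delta> < 1 / sqrt 2" using delta_bound by (simp add: J_def)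
    then show ?thesis using True by (simp add: R_def pos_less_divide_eq)
  next
    case False
    then have "\<delta> < 1 / sqrt (2 + J)" using delta_bound by (simp add: J_def real_sqrt_divide)
    then show ?thesis using False by (simp add: R_def pos_less_divide_eq)
  qed
  have "s \<le> sqrt (1 + \<delta>) * \<xi> / (1 - \<delta> * R)" using key pos by (simp add: pos_le_divide_eq)
  then have "(1 + D) * s \<le> (1 + D) * (sqrt (1 + \<delta>) * \<xi> / (1 - \<delta> * R))"
    using D0 by (intro mult_left_mono) auto
  also have "\<dots> = ((if CARD('j) = 1 then 2 * sqrt (1 + \<delta>) / (1 - \<delta> * sqrt 2)
                   else (1 + sqrt (1 + real CARD('j))) * sqrt (1 + \<delta>)
                        / (1 - \<delta> * sqrt (2 + real CARD('j)))) * (\<eta> + \<epsilon>))"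
    by (simp add: D_def R_def J_def \<xi>_def)
  finally have fin: "(1 + D) * s \<le> \<dots>" .
  show ?thesis
    using lower upper fin unfolding Sig_def z_def by (meson ereal_less_eq(3) order_trans)
qed

end


theorem theorem6:
  fixes blk :: "'i::finite \<Rightarrow> 'j::finite"
    and G :: "'j \<Rightarrow> 'i set set"
    and K :: "'j \<Rightarrow> nat"
    and M :: "real^'i \<Rightarrow> 'f::{real_inner, complete_space}"
    and \<delta> \<eta> \<epsilon> :: real
    and x0 xs :: "real^'i"
    and e :: 'f
  assumes groups_in_block: "\<And>j g. g \<in> G j \<Longrightarrow> g \<subseteq> {i. blk i = j}"
    and groups_disjoint: "\<And>j. pairwise disjnt (G j)"
    and groups_nonempty: "\<And>j g. g \<in> G j \<Longrightarrow> g \<noteq> {}"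
    and collections_nonempty: "\<And>j. G j \<noteq> {}"
    and K_pos: "\<And>j. K j \<ge> 1"
    and M_lin: "linear M"
    and rip: "RIP M {a - b | a b. a \<in> prod_model blk G K \<and> b \<in> prod_model blk G K} \<delta>"
    and delta_bound: "if CARD('j) = 1 then \<delta> < 1 / sqrt 2
                      else \<delta> < sqrt (1 / (2 + real CARD('j)))"
    and x0_in: "x0 \<in> prod_model blk G K"
    and eta_le: "\<eta> \<le> \<epsilon>"
    and e_le: "norm e \<le> \<eta>"
    and xs_feasible: "norm (M xs - (M x0 + e)) \<le> \<epsilon>"
    and xs_min: "\<And>x. norm (M x - (M x0 + e)) \<le> \<epsilon> \<Longrightarrow> objective blk G K xs \<le> objective blk G K x"
  shows "ereal (norm (xs - x0)) \<le> atomic_norm (prod_model blk G K) (xs - x0) \<and>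
         atomic_norm (prod_model blk G K) (xs - x0) \<le>
           ereal ((if CARD('j) = 1 then 2 * sqrt (1 + \<delta>) / (1 - \<delta> * sqrt 2)
                   else (1 + sqrt (1 + real CARD('j))) * sqrt (1 + \<delta>)
                        / (1 - \<delta> * sqrt (2 + real CARD('j)))) * (\<eta> + \<epsilon>))"
proof -
  interpret gsetup blk G K
    by unfold_locales (use groups_in_block groups_disjoint groups_nonempty collections_nonempty K_pos in auto)
  show ?thesis
    by (rule main[OF M_lin rip delta_bound x0_in eta_le e_le xs_feasible xs_min])
qed

end
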